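(* If $\mu\in\Pr(\mathbb{T})$ satisfies $\mu\,\hat{}\,\mu=\mu$, then $\mu$ is $F$-invariant.
   Context: For $a,b\subseteq(0,1]$ put $a\,\hat{}\,b=\tfrac12 a\cup\tfrac12(b+1)$; $\mathbb{T}$ is the set generated from $\mathbf{1}=\{1\}$ by $\hat{}$ (the free binary system on one generator; each $t\neq\mathbf{1}$ is uniquely $a\,\hat{}\,b$). $\Pr(\mathbb{T})$ is the set of finitely additive probability measures on $\mathbb{T}$ (viewed as positive normalized functionals on $\ell^\infty(\mathbb{T})$), and $(\mu\,\hat{}\,\nu)(f)=\int\int f(x\,\hat{}\,y)\,d\nu(y)\,d\mu(x)$. Thompson's group $F$ has generators $x_0,x_1$ which act partially on $\mathbb{T}$ by re-association: $x_0\cdot((a\,\hat{}\,b)\,\hat{}\,c)=a\,\hat{}\,(b\,\hat{}\,c)$, defined exactly on elements of the form $(a\,\hat{}\,b)\,\hat{}\,c$, and $x_1\cdot(s\,\hat{}\,((a\,\hat{}\,b)\,\hat{}\,c))=s\,\hat{}\,(a\,\hat{}\,(b\,\hat{}\,c))$, defined exactly on elements of the form $s\,\hat{}\,((a\,\hat{}\,b)\,\hat{}\,c)$. For $E\subseteq\mathbb{T}$, $x_i\cdot E=\{x_i\cdot t: t\in E,\ x_i\cdot t \text{ defined}\}$. A measure $\mu\in\Pr(\mathbb{T})$ is $F$-invariant if $\mu(\{t:x_0\cdot t\text{ and }x_1\cdot t\text{ are defined}\})=1$ and $\mu(x_0\cdot E)=\mu(x_1\cdot E)=\mu(E)$ for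 every $E\subseteq\mathbb{T}$. *)

theory Defs
  imports Complex_Main
begin

text \<open>The free binary system on one generator: One is the generator 1,
  Hat a b is a ^ b (left half a, right half b).\<close>
datatype T = One | Hat T T

definition bdd_fun :: "(T \<Rightarrow> real) \<Rightarrow> bool" where
  "bdd_fun f \<longleftrightarrow> (\<exists>B. \<forall>x. \<bar>f x\<bar> \<le> B)"

text \<open>Finitely additive probability measures on T, viewed as positive normalized
  linear functionals on l-infinity(T); only values on bounded functions matter.\<close>
definition PrT :: "((T \<Rightarrow> real) \<Rightarrow> real) \<Rightarrow> bool" where
  "PrT \<mu> \<longleftrightarrow>
     (\<forall>f g. bdd_fun f \<longrightarrow> bdd_fun g \<longrightarrow> \<mu> (\<lambda>x. f x + g x) = \<mu> f + \<mu> g) \<and>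
     (\<forall>c f. bdd_fun f \<longrightarrow> \<mu> (\<lambda>x. c * f x) = c * \<mu> f) \<and>
     (\<forall>f. bdd_fun f \<longrightarrow> (\<forall>x. 0 \<le> f x) \<longrightarrow> 0 \<le> \<mu> f) \<and>
     \<mu> (\<lambda>_. 1) = 1"

definition conv :: "((T \<Rightarrow> real) \<Rightarrow> real) \<Rightarrow> ((T \<Rightarrow> real) \<Rightarrow> real) \<Rightarrow> (T \<Rightarrow> real) \<Rightarrow> real" where
  "conv \<mu> \<nu> f = \<mu> (\<lambda>x. \<nu> (\<lambda>y. f (Hat x y)))"

definition meas :: "((T \<Rightarrow> real) \<Rightarrow> real) \<Rightarrow> T set \<Rightarrow> real" where
  "meas \<mu> E = \<mu> (\<lambda>t. if t \<in> E then 1 else 0)"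

fun x0 :: "T \<Rightarrow> T option" where
  "x0 (Hat (Hat a b) c) = Some (Hat a (Hat b c))"
| "x0 _ = None"

fun x1 :: "T \<Rightarrow> T option" where
  "x1 (Hat s (Hat (Hat a b) c)) = Some (Hat s (Hat a (Hat b c)))"
| "x1 _ = None"

definition act :: "(T \<Rightarrow> T option) \<Rightarrow> T set \<Rightarrow> T set" where
  "act g E = {u. \<exists>t\<in>E. g t = Some u}"

definition F_invariant :: "((T \<Rightarrow> real) \<Rightarrow> real) \<Rightarrow> bool" where
  "F_invariant \<mu> \<longleftrightarrow>
     meas \<mu> {t. x0 t \<noteq> None \<and> x1 t \<noteq> None} = 1 \<and>
     (\<forall>E. meas \<mu> (act x0 E) = meas \<mu> E \<and> meas \<mu> (act x1 E) = meas \<mu> E)"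

end

theory Submission
  imports Defs
begin

lemma bdd_ind[simp]: "bdd_fun (\<lambda>t. if P t then 1 else (0::real))"
  unfolding bdd_fun_def by (rule exI[of _ 1]) auto

lemma bdd_const[simp]: "bdd_fun (\<lambda>t. c)"
  unfolding bdd_fun_def by (rule exI[of _ "\<bar>c\<bar>"]) auto

lemma Pr_add: "PrT \<mu> \<Longrightarrow> bdd_fun f \<Longrightarrow> bdd_fun g \<Longrightarrow> \<mu> (\<lambda>x. f x + g x) = \<mu> f + \<mu> g"
  unfolding PrT_def by blast
lemma Pr_scal: "PrT \<mu> \<Longrightarrow> bdd_fun f \<Longrightarrow> \<mu> (\<lambda>x. c * f x) = c * \<mu> f"
  unfolding PrT_def by blast
lemma Pr_pos: "PrT \<mu> \<Longrightarrow> bdd_fun f \<Longrightarrow> (\<And>x. 0 \<le> f x) \<Longrightarrow> 0 \<le> \<mu> f"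
  unfolding PrT_def by blast
lemma Pr_one: "PrT \<mu> \<Longrightarrow> \<mu> (\<lambda>_. 1) = 1"
  unfolding PrT_def by blast

lemma Pr_const: assumes "PrT \<mu>" shows "\<mu> (\<lambda>_. c) = c"
  using Pr_scal[OF assms bdd_const[of 1], of c] Pr_one[OF assms] by simp

lemma Pr_bound: assumes "PrT \<mu>" "bdd_fun f" "\<And>x. \<bar>f x\<bar> \<le> B" shows "\<bar>\<mu> f\<bar> \<le> B"
proof -
  have bm: "bdd_fun (\<lambda>x. (-1) * f x)" using assms(2) unfolding bdd_fun_def by auto
  have s1: "\<mu> (\<lambda>x. B + (-1) * f x) = B - \<mu> f"
    using Pr_add[OF assms(1) bdd_const bm] Pr_scal[OF assms(1) assms(2), of "-1"] Pr_const[OF assms(1)] by simp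
  have s2: "\<mu> (\<lambda>x. B + f x) = B + \<mu> f"
    using Pr_add[OF assms(1) bdd_const assms(2)] Pr_const[OF assms(1)] by simp
  have bd1: "bdd_fun (\<lambda>x. B + (-1) * f x)" unfolding bdd_fun_def
  proof (rule exI[of _ "2*\<bar>B\<bar>"], intro allI)
    fix x show "\<bar>B + (-1) * f x\<bar> \<le> 2*\<bar>B\<bar>" using assms(3)[of x] by (simp add: abs_le_iff)
  qed
  have bd2: "bdd_fun (\<lambda>x. B + f x)" unfolding bdd_fun_def
  proof (rule exI[of _ "2*\<bar>B\<bar>"], intro allI)
    fix x show "\<bar>B + f x\<bar> \<le> 2*\<bar>B\<bar>" using assms(3)[of x] by (simp add: abs_le_iff)
  qed
  have p1: "0 \<le> B + (-1) * f x" and p2: "0 \<le> B + f x" for x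
    using assms(3)[of x] by (simp_all add: abs_le_iff)
  have "0 \<le> \<mu> (\<lambda>x. B + (-1) * f x)" by (rule Pr_pos[OF assms(1) bd1 p1])
  moreover have "0 \<le> \<mu> (\<lambda>x. B + f x)" by (rule Pr_pos[OF assms(1) bd2 p2])
  ultimately show ?thesis using s1 s2 by linarith
qed

lemma inner_bdd: assumes "PrT \<mu>" "\<And>x. bdd_fun (g x)" "\<And>x y. \<bar>g x y\<bar> \<le> B"
  shows "bdd_fun (\<lambda>x. \<mu> (g x))"
  unfolding bdd_fun_def using Pr_bound[OF assms(1) assms(2) assms(3)] by blast

locale idem =
  fixes \<mu> :: "(T \<Rightarrow> real) \<Rightarrow> real"
  assumes P: "PrT \<mu>" and I: "\<forall>f. bdd_fun f \<longrightarrow> conv \<mu> \<mu> f = \<mu> f"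
begin

lemma split: "bdd_fun f \<Longrightarrow> \<mu> f = \<mu> (\<lambda>x. \<mu> (\<lambda>y. f (Hat x y)))"
  using I unfolding conv_def by metis

lemma ind_bdd: "bdd_fun (\<lambda>x. \<mu> (\<lambda>y. if P x y then 1 else 0))"
  by (rule inner_bdd[OF P, of _ 1]) auto

lemma ind_bdd3: "bdd_fun (\<lambda>x. \<mu> (\<lambda>y. \<mu> (\<lambda>z. if P x y z then 1 else 0)))"
proof (rule inner_bdd[OF P, of _ 1])
  fix x show "bdd_fun (\<lambda>y. \<mu> (\<lambda>z. if P x y z then 1 else 0))" by (rule ind_bdd)
next
  fix x y show "\<bar>\<mu> (\<lambda>z. if P x y z then 1 else 0)\<bar> \<le> 1"
    by (rule Pr_bound[OF P]) auto
qed

lemma right_assoc: "\<mu> (\<lambda>t. if t \<in> E then 1 else 0) =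
   \<mu> (\<lambda>x. \<mu> (\<lambda>y. \<mu> (\<lambda>z. if Hat x (Hat y z) \<in> E then 1 else 0)))"
proof -
  have "\<mu> (\<lambda>t. if t \<in> E then 1 else 0) = \<mu> (\<lambda>x. \<mu> (\<lambda>w. if Hat x w \<in> E then 1 else 0))"
    by (rule split) simp
  also have "(\<lambda>x. \<mu> (\<lambda>w. if Hat x w \<in> E then 1 else 0)) =
     (\<lambda>x. \<mu> (\<lambda>y. \<mu> (\<lambda>z. if Hat x (Hat y z) \<in> E then 1 else 0)))"
    by (rule ext, rule split) simp
  finally show ?thesis .
qed

lemma left_assoc: "\<mu> (\<lambda>t. if t \<in> E then 1 else 0) =
   \<mu> (\<lambda>x. \<mu> (\<lambda>y. \<mu> (\<lambda>z. if Hat (Hat x y) z \<in> E then 1 else 0)))"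
proof -
  have "\<mu> (\<lambda>t. if t \<in> E then 1 else 0) = \<mu> (\<lambda>u. \<mu> (\<lambda>z. if Hat u z \<in> E then 1 else 0))"
    by (rule split) simp
  also have "\<dots> = \<mu> (\<lambda>x. \<mu> (\<lambda>y. \<mu> (\<lambda>z. if Hat (Hat x y) z \<in> E then 1 else 0)))"
    by (rule split[OF ind_bdd])
  finally show ?thesis .
qed

lemma inv0: "meas \<mu> (act x0 E) = meas \<mu> E"
proof -
  have eq: "(Hat x (Hat y z) \<in> act x0 E) = (Hat (Hat x y) z \<in> E)" for x y z
  proof
    assume "Hat x (Hat y z) \<in> act x0 E"
    then obtain t where "t \<in> E" "x0 t = Some (Hat x (Hat y z))" unfolding act_def by auto
    then show "Hat (Hat x y) z \<in> E" by (cases t rule: x0.cases) auto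
  next
    assume "Hat (Hat x y) z \<in> E"
    then show "Hat x (Hat y z) \<in> act x0 E" unfolding act_def by (intro CollectI bexI[of _ "Hat (Hat x y) z"]) auto
  qed
  show ?thesis unfolding meas_def
    by (subst right_assoc, subst left_assoc[of E]) (simp add: eq)
qed

lemma inv1: "meas \<mu> (act x1 E) = meas \<mu> E"
proof -
  have eq: "(Hat s w \<in> act x1 E) = (w \<in> act x0 {v. Hat s v \<in> E})" for s w
  proof
    assume "Hat s w \<in> act x1 E"
    then obtain t where "t \<in> E" "x1 t = Some (Hat s w)" unfolding act_def by auto
    then show "w \<in> act x0 {v. Hat s v \<in> E}" unfolding act_def
      by (cases t rule: x1.cases) auto
  next
    assume "w \<in> act x0 {v. Hat s v \<in> E}"
    then obtain t where "Hat s t \<in> E" "x0 t = Some w" unfolding act_def by auto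
    then show "Hat s w \<in> act x1 E"
    proof (cases t rule: x0.cases)
      case (1 a b c)
      then show ?thesis using \<open>Hat s t \<in> E\<close> \<open>x0 t = Some w\<close>
        unfolding act_def by (intro CollectI bexI[of _ "Hat s t"]) auto
    qed auto
  qed
  have "meas \<mu> (act x1 E) = \<mu> (\<lambda>s. \<mu> (\<lambda>w. if Hat s w \<in> act x1 E then 1 else 0))"
    unfolding meas_def by (rule split) simp
  also have "\<dots> = \<mu> (\<lambda>s. meas \<mu> (act x0 {v. Hat s v \<in> E}))"
    unfolding meas_def by (simp add: eq)
  also have "\<dots> = \<mu> (\<lambda>s. meas \<mu> {v. Hat s v \<in> E})" by (simp add: inv0)
  also have "\<dots> = meas \<mu> E" unfolding meas_def mem_Collect_eq by (rule split[symmetric]) simp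
  finally show ?thesis .
qed

lemma dom: "meas \<mu> {t. x0 t \<noteq> None \<and> x1 t \<noteq> None} = 1"
proof -
  let ?H = "\<lambda>x::T. if x \<noteq> One then 1 else (0::real)"
  let ?G = "\<lambda>x::T. if x0 x \<noteq> None then 1 else (0::real)"
  have one0: "\<mu> (\<lambda>x. if x = One then 1 else 0) = 0"
    by (subst split) (simp_all add: Pr_const[OF P])
  have "\<mu> (\<lambda>x. 1 + (-1) * (if x = One then 1 else 0)) = 1"
    using Pr_add[OF P bdd_const[of 1], of "\<lambda>x. (-1) * (if x = One then 1 else 0)"]
      Pr_scal[OF P bdd_ind[of "\<lambda>x. x = One"], of "-1"] one0 Pr_const[OF P]
    unfolding bdd_fun_def by force
  moreover have "(\<lambda>x. 1 + (-1) * (if x = One then 1 else 0)) = ?H" by auto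
  ultimately have H1: "\<mu> ?H = 1" by simp
  have G1: "\<mu> ?G = 1"
  proof -
    have "\<mu> ?G = \<mu> (\<lambda>x. \<mu> (\<lambda>y. ?G (Hat x y)))" by (rule split) simp
    also have "(\<lambda>x. \<mu> (\<lambda>y. ?G (Hat x y))) = ?H"
    proof
      fix x show "\<mu> (\<lambda>y. ?G (Hat x y)) = ?H x"
        by (cases x) (simp_all add: Pr_const[OF P])
    qed
    finally show ?thesis using H1 by simp
  qed
  have "meas \<mu> {t. x0 t \<noteq> None \<and> x1 t \<noteq> None} =
     \<mu> (\<lambda>x. \<mu> (\<lambda>y. if Hat x y \<in> {t. x0 t \<noteq> None \<and> x1 t \<noteq> None} then 1 else 0))"
    unfolding meas_def by (rule split) simp
  also have "(\<lambda>x. \<mu> (\<lambda>y. if Hat x y \<in> {t. x0 t \<noteq> None \<and> x1 t \<noteq> None} then 1 else 0)) = ?H"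
  proof
    fix x
    have "(\<lambda>y. if Hat x y \<in> {t. x0 t \<noteq> None \<and> x1 t \<noteq> None} then 1 else 0) = (\<lambda>y. ?H x * ?G y)"
    proof
      fix y show "(if Hat x y \<in> {t. x0 t \<noteq> None \<and> x1 t \<noteq> None} then 1 else 0) = ?H x * ?G y"
        by (cases x; cases y rule: x0.cases) auto
    qed
    then show "\<mu> (\<lambda>y. if Hat x y \<in> {t. x0 t \<noteq> None \<and> x1 t \<noteq> None} then 1 else 0) = ?H x"
      using Pr_scal[OF P bdd_ind[of "\<lambda>y. x0 y \<noteq> None"], of "?H x"] G1 by simp
  qed
  finally show ?thesis using H1 by simp
qed

end

theorem proposition3p3:
  assumes "PrT \<mu>"
    and "\<forall>f. bdd_fun f \<longrightarrow> conv \<mu> \<mu> f = \<mu> f"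
  shows "F_invariant \<mu>"
proof -
  interpret idem \<mu> using assms by unfold_locales
  show ?thesis unfolding F_invariant_def using dom inv0 inv1 by blast
qed

end
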